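(* The axiom system $APAL_{int}$ is complete with respect to the class of all topo-models: for every formula $\varphi\in\mathcal{L}_{APAL_{int}}$, if $\varphi$ is valid in every topo-model, then $\varphi$ is a theorem of $APAL_{int}$.
   Context: Fix a countable set $\mathit{Prop}$ of propositional variables and a finite non-empty set $\mathcal{A}$ of agents. $\mathcal{L}_{APAL_{int}}$: $\varphi ::= p \mid \neg\varphi \mid \varphi\wedge\varphi \mid K_i\varphi \mid \mathrm{int}(\varphi)\mid [\varphi]\varphi\mid\Box\varphi$; $\mathcal{L}_{PAL_{int}}$ is its $\Box$-free fragment; $\bot:=p\wedge\neg p$, other connectives are abbreviations. Topo-models: $(X,\tau)$ a topological space with interior operator $\mathrm{Int}$. A neighbourhood function set $\Phi$ is a set of partial functions $\theta$ from $X$ to functions $\mathcal{A}\to\tau$ such that for all $x,y\in Dom(\theta)$, $i\in\mathcal{A}$, $U\in\tau$: (1) $\theta(x)(i)\in\tau$; (2) $x\in\theta(x)(i)$; (3) $\theta(x)(i)\subseteq Dom(\theta)$; (4) $y\in\theta(x)(i)$ implies $\theta(x)(i)=\theta(y)(i)$; (5) $\theta|_U\in\Phi$, where $Dom(\theta|_U)=Dom(\theta)\cap U$, $\theta|_U(x)(i)=\theta(x)(i)\cap U$. A topo-model is $(X,\tau,\Phi,V)$ with $V(p)\subseteq X$. Neighbourhood situations are $(x,\theta)$, $\theta\in\Phi$, $x\in Dom(\theta)$. Semantics: $(x,\theta)\models p$ iff $x\in V(p)$; Booleans usual; $(x,\theta)\models K_i\varphi$ iff $(y,\theta)\models\varphi$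 for all $y\in\theta(x)(i)$; $(x,\theta)\models\mathrm{int}(\varphi)$ iff $x\in\mathrm{Int}([\![\varphi]\!]^\theta)$ with $[\![\varphi]\!]^\theta=\{y\in Dom(\theta)\mid(y,\theta)\models\varphi\}$; $(x,\theta)\models[\varphi]\psi$ iff $(x,\theta)\models\mathrm{int}(\varphi)$ implies $(x,\theta^\varphi)\models\psi$, with $\theta^\varphi=\theta|_{\mathrm{Int}([\![\varphi]\!]^\theta)}$; $(x,\theta)\models\Box\varphi$ iff $(x,\theta)\models[\psi]\varphi$ for all $\psi\in\mathcal{L}_{PAL_{int}}$. Validity = truth at all neighbourhood situations. Necessity forms: $\xi(\sharp)::=\sharp\mid\varphi\to\xi(\sharp)\mid K_i\xi(\sharp)\mid\mathrm{int}(\xi(\sharp))\mid[\varphi]\xi(\sharp)$; $\xi(\varphi)$ replaces the unique $\sharp$ by $\varphi$. $APAL_{int}$: axioms: propositional tautologies; $K_i(\varphi\to\psi)\to(K_i\varphi\to K_i\psi)$; $K_i\varphi\to\varphi$; $K_i\varphi\to K_iK_i\varphi$; $\neg K_i\varphi\to K_i\neg K_i\varphi$; $\mathrm{int}(\varphi\to\psi)\to(\mathrm{int}(\varphi)\to\mathrm{int}(\psi))$; $\mathrm{int}(\varphi)\to\varphi$; $\mathrm{int}(\varphi)\to\mathrm{int}(\mathrm{int}(\varphi))$; $K_i\varphi\to\mathrm{int}(\varphi)$; (R1) $[\varphi]p\leftrightarrow(\mathrm{int}(\varphi)\to p)$; (R2) $[\varphi]\neg\psi\leftrightarrow(\mathrm{int}(\varphi)\to\neg[\varphi]\psi)$;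 (R3) $[\varphi](\psi\wedge\chi)\leftrightarrow[\varphi]\psi\wedge[\varphi]\chi$; (R4) $[\varphi]\mathrm{int}(\psi)\leftrightarrow(\mathrm{int}(\varphi)\to\mathrm{int}([\varphi]\psi))$; (R5) $[\varphi]K_i\psi\leftrightarrow(\mathrm{int}(\varphi)\to K_i[\varphi]\psi)$; (R6) $[\varphi][\psi]\chi\leftrightarrow[\neg[\varphi]\neg\mathrm{int}(\psi)]\chi$; (R7) $\Box\varphi\to[\chi]\varphi$ for $\chi\in\mathcal{L}_{PAL_{int}}$. Rules: modus ponens; from $\varphi$ infer $K_i\varphi$; from $\varphi$ infer $\mathrm{int}(\varphi)$; from $\varphi$ infer $[\psi]\varphi$; (DR5) from $\xi([\psi]\chi)$ for all $\psi\in\mathcal{L}_{PAL_{int}}$ infer $\xi(\Box\chi)$. Theorems: smallest set containing the axioms and closed under the rules. *)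

theory Defs
  imports "HOL-Analysis.Analysis"
begin

datatype ('p, 'a) fm =
    Atom 'p
  | Neg "('p, 'a) fm"
  | Conj "('p, 'a) fm" "('p, 'a) fm"
  | K 'a "('p, 'a) fm"
  | IntOp "('p, 'a) fm"
  | Ann "('p, 'a) fm" "('p, 'a) fm"   (* Ann phi psi = [phi] psi *)
  | Box "('p, 'a) fm"

abbreviation Imp :: "('p, 'a) fm \<Rightarrow> ('p, 'a) fm \<Rightarrow> ('p, 'a) fm" where
  "Imp a b \<equiv> Neg (Conj a (Neg b))"

abbreviation Iff :: "('p, 'a) fm \<Rightarrow> ('p, 'a) fm \<Rightarrow> ('p, 'a) fm" where
  "Iff a b \<equiv> Conj (Imp a b) (Imp b a)"

fun pal :: "('p, 'a) fm \<Rightarrow> bool" where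
  "pal (Atom p) = True"
| "pal (Neg a) = pal a"
| "pal (Conj a b) = (pal a \<and> pal b)"
| "pal (K i a) = pal a"
| "pal (IntOp a) = pal a"
| "pal (Ann a b) = (pal a \<and> pal b)"
| "pal (Box a) = False"

fun boxdepth :: "('p, 'a) fm \<Rightarrow> nat" where
  "boxdepth (Atom p) = 0"
| "boxdepth (Neg a) = boxdepth a"
| "boxdepth (Conj a b) = max (boxdepth a) (boxdepth b)"
| "boxdepth (K i a) = boxdepth a"
| "boxdepth (IntOp a) = boxdepth a"
| "boxdepth (Ann a b) = max (boxdepth a) (boxdepth b)"
| "boxdepth (Box a) = Suc (boxdepth a)"

lemma pal_boxdepth: "pal a \<Longrightarrow> boxdepth a = 0"
  by (induction a) auto

text \<open>A partial function from X to functions A -> tau is represented as a map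
  'x \<Rightarrow> ('a \<Rightarrow> 'x set) option; its domain is dom theta.\<close>
type_synonym ('x, 'a) nfun = "'x \<Rightarrow> ('a \<Rightarrow> 'x set) option"

definition nb :: "('x, 'a) nfun \<Rightarrow> 'x \<Rightarrow> 'a \<Rightarrow> 'x set" where
  "nb \<theta> x i = the (\<theta> x) i"

definition restr :: "('x, 'a) nfun \<Rightarrow> 'x set \<Rightarrow> ('x, 'a) nfun" where
  "restr \<theta> U = (\<lambda>x. if x \<in> U then map_option (\<lambda>f i. f i \<inter> U) (\<theta> x) else None)"

definition nbhd_fun :: "'x topology \<Rightarrow> ('x, 'a) nfun \<Rightarrow> bool" where
  "nbhd_fun T \<theta> \<longleftrightarrow> dom \<theta> \<subseteq> topspace T \<and>
     (\<forall>x\<in>dom \<theta>. \<forall>i. openin T (nb \<theta> x i) \<and> x \<in> nb \<theta> x i \<and> nb \<theta> x i \<subseteq> dom \<theta> \<and>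
        (\<forall>y\<in>dom \<theta>. y \<in> nb \<theta> x i \<longrightarrow> nb \<theta> x i = nb \<theta> y i))"

definition nbhd_set :: "'x topology \<Rightarrow> ('x, 'a) nfun set \<Rightarrow> bool" where
  "nbhd_set T \<Phi> \<longleftrightarrow> (\<forall>\<theta>\<in>\<Phi>. nbhd_fun T \<theta> \<and> (\<forall>U. openin T U \<longrightarrow> restr \<theta> U \<in> \<Phi>))"

definition topo_model :: "'x topology \<Rightarrow> ('x, 'a) nfun set \<Rightarrow> ('p \<Rightarrow> 'x set) \<Rightarrow> bool" where
  "topo_model T \<Phi> V \<longleftrightarrow> nbhd_set T \<Phi> \<and> (\<forall>p. V p \<subseteq> topspace T)"

text \<open>In the Box clause,
  (x,theta) |= [psi]phi is unfolded per its definition; the recursion terminates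
  since psi is Box-free (lexicographic measure: Box-depth, then size).\<close>
function sat :: "'x topology \<Rightarrow> ('p \<Rightarrow> 'x set) \<Rightarrow> ('x, 'a) nfun \<Rightarrow> 'x \<Rightarrow> ('p, 'a) fm \<Rightarrow> bool" where
  "sat T V \<theta> x (Atom p) = (x \<in> V p)"
| "sat T V \<theta> x (Neg a) = (\<not> sat T V \<theta> x a)"
| "sat T V \<theta> x (Conj a b) = (sat T V \<theta> x a \<and> sat T V \<theta> x b)"
| "sat T V \<theta> x (K i a) = (\<forall>y\<in>nb \<theta> x i. sat T V \<theta> y a)"
| "sat T V \<theta> x (IntOp a) = (x \<in> T interior_of {y\<in>dom \<theta>. sat T V \<theta> y a})"
| "sat T V \<theta> x (Ann a b) =
     (x \<in> T interior_of {y\<in>dom \<theta>. sat T V \<theta> y a} \<longrightarrow>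
      sat T V (restr \<theta> (T interior_of {y\<in>dom \<theta>. sat T V \<theta> y a})) x b)"
| "sat T V \<theta> x (Box a) =
     (\<forall>c\<in>{c. pal c}.
        x \<in> T interior_of {y\<in>dom \<theta>. sat T V \<theta> y c} \<longrightarrow>
        sat T V (restr \<theta> (T interior_of {y\<in>dom \<theta>. sat T V \<theta> y c})) x a)"
  by pat_completeness auto
termination
  by (relation "inv_image (less_than <*lex*> less_than) (\<lambda>(T, V, \<theta>, x, a). (boxdepth a, size a))")
     (auto simp: pal_boxdepth)

definition valid_in :: "'x itself \<Rightarrow> ('p, 'a) fm \<Rightarrow> bool" where
  "valid_in _ \<phi> \<longleftrightarrow> (\<forall>(T :: 'x topology) \<Phi> V. topo_model T \<Phi> V \<longrightarrow>
      (\<forall>\<theta>\<in>\<Phi>. \<forall>x\<in>dom \<theta>. sat T V \<theta> x \<phi>))"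

text \<open>Propositional tautologies: formulas true under every Boolean valuation that
  treats all non-Boolean subformulas as atoms (= instances of propositional tautologies).\<close>
fun pval :: "(('p, 'a) fm \<Rightarrow> bool) \<Rightarrow> ('p, 'a) fm \<Rightarrow> bool" where
  "pval v (Neg a) = (\<not> pval v a)"
| "pval v (Conj a b) = (pval v a \<and> pval v b)"
| "pval v a = v a"

definition tautology :: "('p, 'a) fm \<Rightarrow> bool" where
  "tautology \<phi> \<longleftrightarrow> (\<forall>v. pval v \<phi>)"

datatype ('p, 'a) nform =
    Hole
  | NImp "('p, 'a) fm" "('p, 'a) nform"
  | NK 'a "('p, 'a) nform"
  | NInt "('p, 'a) nform"
  | NAnn "('p, 'a) fm" "('p, 'a) nform"

fun fill :: "('p, 'a) nform \<Rightarrow> ('p, 'a) fm \<Rightarrow> ('p, 'a) fm" where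
  "fill Hole c = c"
| "fill (NImp a \<xi>) c = Imp a (fill \<xi> c)"
| "fill (NK i \<xi>) c = K i (fill \<xi> c)"
| "fill (NInt \<xi>) c = IntOp (fill \<xi> c)"
| "fill (NAnn a \<xi>) c = Ann a (fill \<xi> c)"

inductive apal_thm :: "('p, 'a) fm \<Rightarrow> bool" where
  Taut: "tautology \<phi> \<Longrightarrow> apal_thm \<phi>"
| K_K: "apal_thm (Imp (K i (Imp \<phi> \<psi>)) (Imp (K i \<phi>) (K i \<psi>)))"
| K_T: "apal_thm (Imp (K i \<phi>) \<phi>)"
| K_4: "apal_thm (Imp (K i \<phi>) (K i (K i \<phi>)))"
| K_5: "apal_thm (Imp (Neg (K i \<phi>)) (K i (Neg (K i \<phi>))))"
| Int_K: "apal_thm (Imp (IntOp (Imp \<phi> \<psi>)) (Imp (IntOp \<phi>) (IntOp \<psi>)))"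
| Int_T: "apal_thm (Imp (IntOp \<phi>) \<phi>)"
| Int_4: "apal_thm (Imp (IntOp \<phi>) (IntOp (IntOp \<phi>)))"
| K_Int: "apal_thm (Imp (K i \<phi>) (IntOp \<phi>))"
| R1: "apal_thm (Iff (Ann \<phi> (Atom p)) (Imp (IntOp \<phi>) (Atom p)))"
| R2: "apal_thm (Iff (Ann \<phi> (Neg \<psi>)) (Imp (IntOp \<phi>) (Neg (Ann \<phi> \<psi>))))"
| R3: "apal_thm (Iff (Ann \<phi> (Conj \<psi> \<rho>)) (Conj (Ann \<phi> \<psi>) (Ann \<phi> \<rho>)))"
| R4: "apal_thm (Iff (Ann \<phi> (IntOp \<psi>)) (Imp (IntOp \<phi>) (IntOp (Ann \<phi> \<psi>))))"
| R5: "apal_thm (Iff (Ann \<phi> (K i \<psi>)) (Imp (IntOp \<phi>) (K i (Ann \<phi> \<psi>))))"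
| R6: "apal_thm (Iff (Ann \<phi> (Ann \<psi> \<rho>)) (Ann (Neg (Ann \<phi> (Neg (IntOp \<psi>)))) \<rho>))"
| R7: "pal \<rho> \<Longrightarrow> apal_thm (Imp (Box \<phi>) (Ann \<rho> \<phi>))"
| MP: "apal_thm (Imp \<phi> \<psi>) \<Longrightarrow> apal_thm \<phi> \<Longrightarrow> apal_thm \<psi>"
| NecK: "apal_thm \<phi> \<Longrightarrow> apal_thm (K i \<phi>)"
| NecInt: "apal_thm \<phi> \<Longrightarrow> apal_thm (IntOp \<phi>)"
| NecAnn: "apal_thm \<phi> \<Longrightarrow> apal_thm (Ann \<psi> \<phi>)"
| DR5: "(\<forall>\<psi>. pal \<psi> \<longrightarrow> apal_thm (fill \<xi> (Ann \<psi> \<rho>))) \<Longrightarrow> apal_thm (fill \<xi> (Box \<rho>))"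

end

theory Submission
  imports Defs
begin

instance fm :: (countable, countable) countable by countable_datatype

definition fbot :: "('p, 'a) fm" where "fbot = Conj (Atom undefined) (Neg (Atom undefined))"

lemma pval_fbot[simp]: "pval v fbot = False" by (simp add: fbot_def)

definition thry :: "('p, 'a) fm set \<Rightarrow> bool" where
  "thry G \<longleftrightarrow> (\<forall>\<phi>. apal_thm \<phi> \<longrightarrow> \<phi> \<in> G) \<and> (\<forall>\<phi> \<psi>. Imp \<phi> \<psi> \<in> G \<longrightarrow> \<phi> \<in> G \<longrightarrow> \<psi> \<in> G)
     \<and> (\<forall>\<xi> \<gamma>. (\<forall>\<psi>. pal \<psi> \<longrightarrow> fill \<xi> (Ann \<psi> \<gamma>) \<in> G) \<longrightarrow> fill \<xi> (Box \<gamma>) \<in> G)"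

definition ext :: "('p, 'a) fm set \<Rightarrow> ('p, 'a) fm \<Rightarrow> ('p, 'a) fm set" where
  "ext G \<phi> = {\<psi>. Imp \<phi> \<psi> \<in> G}"

definition mcs :: "('p, 'a) fm set \<Rightarrow> bool" where
  "mcs G \<longleftrightarrow> thry G \<and> fbot \<notin> G \<and> (\<forall>\<phi>. \<phi> \<in> G \<or> Neg \<phi> \<in> G)"

lemma thry_thm: "thry G \<Longrightarrow> apal_thm \<phi> \<Longrightarrow> \<phi> \<in> G" by (simp add: thry_def)
lemma thry_mp: "thry G \<Longrightarrow> Imp \<phi> \<psi> \<in> G \<Longrightarrow> \<phi> \<in> G \<Longrightarrow> \<psi> \<in> G" by (simp add: thry_def)
lemma thry_dr5: "thry G \<Longrightarrow> (\<And>\<psi>. pal \<psi> \<Longrightarrow> fill \<xi> (Ann \<psi> \<gamma>) \<in> G) \<Longrightarrow> fill \<xi> (Box \<gamma>) \<in> G"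
  by (simp add: thry_def)

lemma thry_taut1: "thry G \<Longrightarrow> tautology (Imp a b) \<Longrightarrow> a \<in> G \<Longrightarrow> b \<in> G"
  by (meson Taut thry_mp thry_thm)

lemma thry_taut2: "thry G \<Longrightarrow> tautology (Imp a (Imp b c)) \<Longrightarrow> a \<in> G \<Longrightarrow> b \<in> G \<Longrightarrow> c \<in> G"
  by (meson Taut thry_mp thry_thm)

lemma thry_thms: "thry {\<phi>. apal_thm \<phi>}"
  unfolding thry_def by (auto intro: MP DR5)

lemma ext_thry: fixes G :: "('p, 'a) fm set" assumes "thry G" shows "thry (ext G \<phi>)"
  unfolding thry_def ext_def
proof (intro conjI allI impI; simp)
  fix \<psi> :: "('p, 'a) fm" assume "apal_thm \<psi>"
  moreover have "apal_thm (Imp \<psi> (Imp \<phi> \<psi>))" by (rule Taut) (simp add: tautology_def)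
  ultimately have "apal_thm (Imp \<phi> \<psi>)" using MP by blast
  thus "Imp \<phi> \<psi> \<in> G" using assms thry_thm by blast
next
  fix a b :: "('p, 'a) fm" assume "Imp \<phi> (Imp a b) \<in> G" "Imp \<phi> a \<in> G"
  thus "Imp \<phi> b \<in> G" using thry_taut2[OF assms, of "Imp \<phi> (Imp a b)" "Imp \<phi> a" "Imp \<phi> b"]
    by (auto simp: tautology_def)
next
  fix \<xi> :: "('p, 'a) nform" and \<gamma> :: "('p, 'a) fm" assume "\<forall>\<psi>. pal \<psi> \<longrightarrow> Imp \<phi> (fill \<xi> (Ann \<psi> \<gamma>)) \<in> G"
  hence "\<forall>\<psi>. pal \<psi> \<longrightarrow> fill (NImp \<phi> \<xi>) (Ann \<psi> \<gamma>) \<in> G" by simp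
  hence "fill (NImp \<phi> \<xi>) (Box \<gamma>) \<in> G" using thry_dr5[OF assms] by blast
  thus "Imp \<phi> (fill \<xi> (Box \<gamma>)) \<in> G" by simp
qed

lemma ext_sub: "thry G \<Longrightarrow> G \<subseteq> ext G \<phi>"
  unfolding ext_def by (auto intro: thry_taut1 simp: tautology_def)

lemma ext_in: "thry G \<Longrightarrow> \<phi> \<in> ext G \<phi>"
  unfolding ext_def by (simp, intro thry_thm Taut) (simp_all add: tautology_def)

lemma ext_cons: assumes "thry G" shows "fbot \<in> ext G \<phi> \<longleftrightarrow> Neg \<phi> \<in> G"
  unfolding ext_def using thry_taut1[OF assms, of "Imp \<phi> fbot" "Neg \<phi>"]
    thry_taut1[OF assms, of "Neg \<phi>" "Imp \<phi> fbot"]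
  by (auto simp: tautology_def)

lemma fill_box_inj: "fill \<xi> (Box \<gamma>) = fill \<xi>' (Box \<gamma>') \<Longrightarrow> \<xi> = \<xi>' \<and> \<gamma> = \<gamma>'"
  by (induction \<xi> arbitrary: \<xi>') (case_tac \<xi>'; auto)+

section \<open>Lindenbaum\<close>

definition wit :: "('p, 'a) nform \<times> ('p, 'a) fm \<times> ('p, 'a) fm \<Rightarrow> ('p, 'a) fm" where
  "wit t = Neg (fill (fst t) (Ann (snd (snd t)) (fst (snd t))))"

definition cand :: "('p, 'a) fm set \<Rightarrow> ('p, 'a) fm \<Rightarrow> ('p, 'a) nform \<times> ('p, 'a) fm \<times> ('p, 'a) fm \<Rightarrow> bool" where
  "cand G \<phi> t \<longleftrightarrow> \<phi> = fill (fst t) (Box (fst (snd t))) \<and> pal (snd (snd t)) \<and> fbot \<notin> ext G (wit t)"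

definition step :: "('p, 'a) fm set \<Rightarrow> ('p, 'a) fm \<Rightarrow> ('p, 'a) fm set" where
  "step G \<phi> = (if fbot \<notin> ext G \<phi> then ext G \<phi>
     else if (\<exists>t. cand G \<phi> t) then ext G (wit (SOME t. cand G \<phi> t)) else G)"

lemma step_props: assumes "thry G" "fbot \<notin> G"
  shows "thry (step G \<phi>) \<and> fbot \<notin> step G \<phi> \<and> G \<subseteq> step G \<phi>"
proof (cases "fbot \<notin> ext G \<phi>")
  case True thus ?thesis using assms by (simp add: step_def ext_thry ext_sub)
next
  case F: False
  show ?thesis
  proof (cases "\<exists>t. cand G \<phi> t")
    case True
    hence "cand G \<phi> (SOME t. cand G \<phi> t)" by (rule someI_ex)
    hence "fbot \<notin> ext G (wit (SOME t. cand G \<phi> t))" by (simp add: cand_def)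
    moreover have "step G \<phi> = ext G (wit (SOME t. cand G \<phi> t))"
      using F True unfolding step_def by simp
    ultimately show ?thesis using assms by (simp add: ext_thry ext_sub)
  next
    case False thus ?thesis using F assms by (simp add: step_def)
  qed
qed

fun chain :: "('p::countable, 'a::countable) fm set \<Rightarrow> nat \<Rightarrow> ('p, 'a) fm set" where
  "chain G 0 = G"
| "chain G (Suc n) = step (chain G n) (from_nat n)"

lemma chain_props: fixes G :: "('p::countable, 'a::countable) fm set" assumes "thry G" "fbot \<notin> G"
  shows "thry (chain G n) \<and> fbot \<notin> chain G n"
  by (induction n) (use assms step_props in auto)

lemma chain_mono: fixes G :: "('p::countable, 'a::countable) fm set" assumes "thry G" "fbot \<notin> G" "m \<le> n" shows "chain G m \<subseteq> chain G n"
proof -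
  have "chain G k \<subseteq> chain G (Suc k)" for k
    using step_props[of "chain G k" "from_nat k"] chain_props[OF assms(1,2), of k] by simp
  thus ?thesis using lift_Suc_mono_le[of "chain G"] assms(3) by blast
qed

lemma lindenbaum: fixes G :: "('p::countable, 'a::countable) fm set" assumes "thry G" "fbot \<notin> G"
  shows "\<exists>D. G \<subseteq> D \<and> mcs D"
proof -
  let ?D = "\<Union>n. chain G n"
  have fin: "\<exists>n. A \<subseteq> chain G n" if "finite A" "A \<subseteq> ?D" for A
    using that
  proof (induction A rule: finite_induct)
    case empty then show ?case by auto
  next
    case (insert a A)
    then obtain n where n: "A \<subseteq> chain G n" by auto
    from insert obtain m where m: "a \<in> chain G m" by auto
    show ?case using chain_mono[OF assms, of n "max n m"] chain_mono[OF assms, of m "max n m"] n m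
      by (intro exI[of _ "max n m"]) auto
  qed
  have nb: "fbot \<notin> ?D" using chain_props[OF assms] by auto
  have hthm: "apal_thm \<phi> \<Longrightarrow> \<phi> \<in> ?D" for \<phi> using assms(1) thry_thm
    by (metis UNIV_I UN_I chain.simps(1))
  have mp: "Imp \<phi> \<psi> \<in> ?D \<Longrightarrow> \<phi> \<in> ?D \<Longrightarrow> \<psi> \<in> ?D" for \<phi> \<psi>
  proof -
    assume a: "Imp \<phi> \<psi> \<in> ?D" "\<phi> \<in> ?D"
    then obtain n where "{Imp \<phi> \<psi>, \<phi>} \<subseteq> chain G n" using fin[of "{Imp \<phi> \<psi>, \<phi>}"] by blast
    hence "Imp \<phi> \<psi> \<in> chain G n" "\<phi> \<in> chain G n" by auto
    hence "\<psi> \<in> chain G n" using thry_mp[of "chain G n"] chain_props[OF assms, of n] by blast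
    thus ?thesis by blast
  qed
  have max: "\<phi> \<in> ?D \<or> Neg \<phi> \<in> ?D" for \<phi>
  proof -
    let ?n = "to_nat \<phi>"
    have th: "thry (chain G ?n)" using chain_props[OF assms] by blast
    show ?thesis
    proof (cases "fbot \<in> ext (chain G ?n) \<phi>")
      case True thus ?thesis using ext_cons[OF th] by blast
    next
      case False
      hence "chain G (Suc ?n) = ext (chain G ?n) \<phi>" by (simp add: step_def)
      hence "\<phi> \<in> chain G (Suc ?n)" using ext_in[OF th] by simp
      thus ?thesis by blast
    qed
  qed
  have dr5: "fill \<xi> (Box \<gamma>) \<in> ?D" if h: "\<forall>c. pal c \<longrightarrow> fill \<xi> (Ann c \<gamma>) \<in> ?D" for \<xi> \<gamma>
  proof (rule ccontr)
    assume nin: "fill \<xi> (Box \<gamma>) \<notin> ?D"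
    let ?\<phi> = "fill \<xi> (Box \<gamma>)"
    let ?n = "to_nat ?\<phi>"
    let ?G = "chain G ?n"
    have th: "thry ?G" and cg: "fbot \<notin> ?G" using chain_props[OF assms] by blast+
    have "fbot \<in> ext ?G ?\<phi>"
    proof (rule ccontr)
      assume "fbot \<notin> ext ?G ?\<phi>"
      hence "chain G (Suc ?n) = ext ?G ?\<phi>" by (simp add: step_def)
      hence "?\<phi> \<in> chain G (Suc ?n)" using ext_in[OF th] by simp
      thus False using nin by blast
    qed
    hence negin: "Neg ?\<phi> \<in> ?G" using ext_cons[OF th] by blast
    have "?\<phi> \<notin> ?G" using nin by blast
    then obtain c where c: "pal c" "fill \<xi> (Ann c \<gamma>) \<notin> ?G" using thry_dr5[OF th] by blast
    have "fbot \<notin> ext ?G (Neg (fill \<xi> (Ann c \<gamma>)))"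
    proof
      assume "fbot \<in> ext ?G (Neg (fill \<xi> (Ann c \<gamma>)))"
      hence "Neg (Neg (fill \<xi> (Ann c \<gamma>))) \<in> ?G" using ext_cons[OF th] by blast
      hence "fill \<xi> (Ann c \<gamma>) \<in> ?G" using thry_taut1[OF th, of "Neg (Neg (fill \<xi> (Ann c \<gamma>)))" "fill \<xi> (Ann c \<gamma>)"] by (simp add: tautology_def)
      thus False using c by blast
    qed
    hence ex: "\<exists>\<xi>' \<gamma>' c'. ?\<phi> = fill \<xi>' (Box \<gamma>') \<and> pal c' \<and> fbot \<notin> ext ?G (Neg (fill \<xi>' (Ann c' \<gamma>')))"
      using c by blast
    have "cand ?G ?\<phi> (\<xi>, \<gamma>, c)" using \<open>fbot \<notin> ext ?G _\<close> c by (simp add: cand_def wit_def)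
    hence ex: "\<exists>t. cand ?G ?\<phi> t" by blast
    obtain \<xi>' \<gamma>' c' where e: "(SOME t. cand ?G ?\<phi> t) = (\<xi>', \<gamma>', c')" by (cases "SOME t. cand ?G ?\<phi> t") auto
    have "cand ?G ?\<phi> (SOME t. cand ?G ?\<phi> t)" using ex by (rule someI_ex)
    hence P: "cand ?G ?\<phi> (\<xi>', \<gamma>', c')" using e by simp
    hence eq: "\<xi>' = \<xi>" "\<gamma>' = \<gamma>" and P': "pal c'" using fill_box_inj unfolding cand_def by auto
    have fb: "fbot \<in> ext ?G ?\<phi>" by fact
    have "chain G (Suc ?n) = ext ?G (wit (\<xi>', \<gamma>', c'))"
      using fb ex e by (simp add: step_def)
    hence "Neg (fill \<xi> (Ann c' \<gamma>)) \<in> chain G (Suc ?n)" using ext_in[OF th] eq by (simp add: wit_def)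
    hence in1: "Neg (fill \<xi> (Ann c' \<gamma>)) \<in> ?D" by blast
    have in2: "fill \<xi> (Ann c' \<gamma>) \<in> ?D" using h P' by auto
    obtain m where "{Neg (fill \<xi> (Ann c' \<gamma>)), fill \<xi> (Ann c' \<gamma>)} \<subseteq> chain G m"
      using fin[of "{Neg (fill \<xi> (Ann c' \<gamma>)), fill \<xi> (Ann c' \<gamma>)}"] in1 in2 by auto
    hence "fbot \<in> chain G m" using thry_taut2[of "chain G m" "Neg (fill \<xi> (Ann c' \<gamma>))" "fill \<xi> (Ann c' \<gamma>)" fbot]
      chain_props[OF assms] by (auto simp: tautology_def)
    thus False using nb by blast
  qed
  have "thry ?D" unfolding thry_def using hthm mp dr5 by blast
  moreover have "G \<subseteq> ?D" using chain.simps(1)[of G] by blast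
  ultimately show ?thesis using nb max unfolding mcs_def by blast
qed



context fixes G :: "('p, 'a) fm set" assumes m: "mcs G" begin

lemma mthry: "thry G" using m by (simp add: mcs_def)
lemma mthm: "apal_thm \<phi> \<Longrightarrow> \<phi> \<in> G" using thry_thm[OF mthry] .
lemma mmp: "Imp \<phi> \<psi> \<in> G \<Longrightarrow> \<phi> \<in> G \<Longrightarrow> \<psi> \<in> G" using thry_mp[OF mthry] .

lemma mneg[simp]: "Neg \<phi> \<in> G \<longleftrightarrow> \<phi> \<notin> G"
proof
  assume a: "Neg \<phi> \<in> G" show "\<phi> \<notin> G"
  proof
    assume "\<phi> \<in> G"
    hence "fbot \<in> G" using thry_taut2[OF mthry, of \<phi> "Neg \<phi>" fbot] a by (simp add: tautology_def)
    thus False using m by (simp add: mcs_def)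
  qed
next
  assume "\<phi> \<notin> G" thus "Neg \<phi> \<in> G" using m by (auto simp: mcs_def)
qed

lemma mconj[simp]: "Conj a b \<in> G \<longleftrightarrow> a \<in> G \<and> b \<in> G"
proof -
  have t: "tautology (Imp (Conj a b) a)" "tautology (Imp (Conj a b) b)" "tautology (Imp a (Imp b (Conj a b)))"
    by (simp_all add: tautology_def)
  show ?thesis using thry_taut1[OF mthry t(1)] thry_taut1[OF mthry t(2)] thry_taut2[OF mthry t(3)] by blast
qed

lemma mimp: "Imp a b \<in> G \<longleftrightarrow> (a \<in> G \<longrightarrow> b \<in> G)" by (simp only: mneg mconj) blast
lemma miff: "Iff a b \<in> G \<longleftrightarrow> (a \<in> G \<longleftrightarrow> b \<in> G)" by (simp only: mneg mconj) blast

lemma mR1: "Ann \<psi> (Atom p) \<in> G \<longleftrightarrow> (IntOp \<psi> \<in> G \<longrightarrow> Atom p \<in> G)"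
  using mthm[OF R1[of \<psi> p]] by (simp only: mneg mconj) blast
lemma mR2: "Ann \<psi> (Neg a) \<in> G \<longleftrightarrow> (IntOp \<psi> \<in> G \<longrightarrow> Ann \<psi> a \<notin> G)"
  using mthm[OF R2[of \<psi> a]] by (simp only: mneg mconj) blast
lemma mR3: "Ann \<psi> (Conj a b) \<in> G \<longleftrightarrow> Ann \<psi> a \<in> G \<and> Ann \<psi> b \<in> G"
  using mthm[OF R3[of \<psi> a b]] by (simp only: mneg mconj) blast
lemma mR4: "Ann \<psi> (IntOp a) \<in> G \<longleftrightarrow> (IntOp \<psi> \<in> G \<longrightarrow> IntOp (Ann \<psi> a) \<in> G)"
  using mthm[OF R4[of \<psi> a]] by (simp only: mneg mconj) blast
lemma mR5: "Ann \<psi> (K i a) \<in> G \<longleftrightarrow> (IntOp \<psi> \<in> G \<longrightarrow> K i (Ann \<psi> a) \<in> G)"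
  using mthm[OF R5[of \<psi> i a]] by (simp only: mneg mconj) blast
lemma mR6: "Ann \<psi> (Ann a b) \<in> G \<longleftrightarrow> Ann (Neg (Ann \<psi> (Neg (IntOp a)))) b \<in> G"
  using mthm[OF R6[of \<psi> a b]] by (simp only: mneg mconj) blast
lemma mR7: "pal c \<Longrightarrow> Box a \<in> G \<Longrightarrow> Ann c a \<in> G"
  using mthm[OF R7[of c a]] mmp by blast

lemma mIntT: "IntOp a \<in> G \<Longrightarrow> a \<in> G" using mthm[OF Int_T[of a]] mmp by blast
lemma mInt4: "IntOp a \<in> G \<Longrightarrow> IntOp (IntOp a) \<in> G" using mthm[OF Int_4[of a]] mmp by blast
lemma mIntK: "IntOp (Imp a b) \<in> G \<Longrightarrow> IntOp a \<in> G \<Longrightarrow> IntOp b \<in> G"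
  using mthm[OF Int_K[of a b]] mmp by blast
lemma mKT: "K i a \<in> G \<Longrightarrow> a \<in> G" using mthm[OF K_T[of i a]] mmp by blast
lemma mK4: "K i a \<in> G \<Longrightarrow> K i (K i a) \<in> G" using mthm[OF K_4[of i a]] mmp by blast
lemma mK5: "K i a \<notin> G \<Longrightarrow> K i (Neg (K i a)) \<in> G" using mthm[OF K_5[of i a]] mmp mneg by blast
lemma mKK: "K i (Imp a b) \<in> G \<Longrightarrow> K i a \<in> G \<Longrightarrow> K i b \<in> G"
  using mthm[OF K_K[of i a b]] mmp by blast
lemma mKInt: "K i a \<in> G \<Longrightarrow> IntOp a \<in> G" using mthm[OF K_Int[of i a]] mmp by blast

lemma mInt_mono: "apal_thm (Imp a b) \<Longrightarrow> IntOp a \<in> G \<Longrightarrow> IntOp b \<in> G"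
  by (rule mIntK[OF mthm[OF NecInt]])
lemma mK_mono: "apal_thm (Imp a b) \<Longrightarrow> K i a \<in> G \<Longrightarrow> K i b \<in> G"
  by (rule mKK[OF mthm[OF NecK]])

lemma mint_conj: "IntOp (Conj a b) \<in> G \<longleftrightarrow> IntOp a \<in> G \<and> IntOp b \<in> G"
proof -
  have t1: "apal_thm (Imp (Conj a b) a)" "apal_thm (Imp (Conj a b) b)"
    by (rule Taut, simp add: tautology_def)+
  have t2: "apal_thm (Imp a (Imp b (Conj a b)))" by (rule Taut, simp add: tautology_def)
  show ?thesis
  proof
    assume "IntOp (Conj a b) \<in> G" thus "IntOp a \<in> G \<and> IntOp b \<in> G"
      using mInt_mono[OF t1(1)] mInt_mono[OF t1(2)] by simp
  next
    assume "IntOp a \<in> G \<and> IntOp b \<in> G"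
    thus "IntOp (Conj a b) \<in> G" using mInt_mono[OF t2] mIntK[of b "Conj a b"] by simp
  qed
qed

lemma mint_int: "IntOp (IntOp a) \<in> G \<longleftrightarrow> IntOp a \<in> G" using mIntT mInt4 by blast

lemma mbox: "Box a \<in> G \<longleftrightarrow> (\<forall>c. pal c \<longrightarrow> Ann c a \<in> G)"
proof
  assume "Box a \<in> G" thus "\<forall>c. pal c \<longrightarrow> Ann c a \<in> G" using mR7 by blast
next
  assume "\<forall>c. pal c \<longrightarrow> Ann c a \<in> G"
  thus "Box a \<in> G" using thry_dr5[OF mthry, of Hole a] by simp
qed

end

lemma ann_step: assumes m: "mcs G" and IH: "\<And>\<psi>. IntOp \<psi> \<notin> G \<Longrightarrow> Ann \<psi> b \<in> G"
  and n: "IntOp \<psi> \<notin> G" shows "Ann \<psi> (Ann a b) \<in> G"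
proof -
  let ?\<psi>' = "Neg (Ann \<psi> (Neg (IntOp a)))"
  have "Ann \<psi> (Neg (IntOp a)) \<in> G" using mR2[OF m] n by blast
  hence "?\<psi>' \<notin> G" using m by simp
  hence "IntOp ?\<psi>' \<notin> G" using mIntT[OF m] by blast
  thus ?thesis using IH mR6[OF m] by blast
qed

lemma ann_noint: "mcs G \<Longrightarrow> IntOp \<psi> \<notin> G \<Longrightarrow> Ann \<psi> \<gamma> \<in> G"
proof (induction \<gamma> arbitrary: \<psi>)
  case (Atom p) thus ?case using mR1[OF Atom.prems(1)] by blast
next
  case (Neg \<gamma>) thus ?case using mR2[OF Neg.prems(1)] by blast
next
  case (Conj \<gamma>1 \<gamma>2) thus ?case using mR3[OF Conj.prems(1)] by blast
next
  case (K i \<gamma>) thus ?case using mR5[OF K.prems(1)] by blast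
next
  case (IntOp \<gamma>) thus ?case using mR4[OF IntOp.prems(1)] by blast
next
  case (Ann \<gamma>1 \<gamma>2)
  have "\<And>\<psi>'. IntOp \<psi>' \<notin> G \<Longrightarrow> Ann \<psi>' \<gamma>2 \<in> G" using Ann.IH(2) Ann.prems(1) by blast
  from ann_step[OF Ann.prems(1) this Ann.prems(2)] show ?case .
next
  case (Box \<gamma>)
  have "Ann \<psi> (Ann c \<gamma>) \<in> G" for c using ann_step[OF Box.prems(1) Box.IH[OF Box.prems(1)] Box.prems(2)] .
  thus ?case using thry_dr5[OF mthry[OF Box.prems(1)], of "NAnn \<psi> Hole" \<gamma>] by simp
qed

lemma ann_dist: assumes m: "mcs G" shows "Ann \<psi> (Imp a b) \<in> G \<Longrightarrow> Ann \<psi> a \<in> G \<Longrightarrow> Ann \<psi> b \<in> G"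
proof -
  assume a1: "Ann \<psi> (Imp a b) \<in> G" and a2: "Ann \<psi> a \<in> G"
  show ?thesis
  proof (cases "IntOp \<psi> \<in> G")
    case True
    hence "Ann \<psi> (Conj a (Neg b)) \<notin> G" using a1 mR2[OF m] by blast
    hence "Ann \<psi> (Neg b) \<notin> G" using a2 mR3[OF m] by blast
    thus ?thesis using True mR2[OF m] by blast
  next
    case False thus ?thesis using ann_noint[OF m] by blast
  qed
qed

lemma mann_box: fixes G :: "('p, 'a) fm set" assumes m: "mcs G"
  shows "Ann \<psi> (Box \<gamma>) \<in> G \<longleftrightarrow> (\<forall>c. pal c \<longrightarrow> Ann \<psi> (Ann c \<gamma>) \<in> G)"
proof
  assume a: "Ann \<psi> (Box \<gamma>) \<in> G"
  show "\<forall>c. pal c \<longrightarrow> Ann \<psi> (Ann c \<gamma>) \<in> G"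
  proof (intro allI impI)
    fix c :: "('p, 'a) fm" assume c: "pal c"
    have "Ann \<psi> (Imp (Box \<gamma>) (Ann c \<gamma>)) \<in> G" by (rule mthm[OF m NecAnn[OF R7[OF c]]])
    thus "Ann \<psi> (Ann c \<gamma>) \<in> G" using ann_dist[OF m] a by blast
  qed
next
  assume "\<forall>c. pal c \<longrightarrow> Ann \<psi> (Ann c \<gamma>) \<in> G"
  thus "Ann \<psi> (Box \<gamma>) \<in> G" using thry_dr5[OF mthry[OF m], of "NAnn \<psi> Hole" \<gamma>] by simp
qed

lemma mcs_valid: fixes \<phi> :: "('p::countable, 'a::countable) fm"
  assumes "\<And>G. mcs G \<Longrightarrow> \<phi> \<in> G" shows "apal_thm \<phi>"
proof (rule ccontr)
  assume n: "\<not> apal_thm \<phi>"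
  let ?T = "{\<phi>. apal_thm \<phi>} :: ('p, 'a) fm set"
  have "fbot \<notin> ext ?T (Neg \<phi>)"
  proof
    assume "fbot \<in> ext ?T (Neg \<phi>)"
    hence "apal_thm (Neg (Neg \<phi>))" using ext_cons[OF thry_thms] by blast
    moreover have "apal_thm (Imp (Neg (Neg \<phi>)) \<phi>)" by (rule Taut) (simp add: tautology_def)
    ultimately show False using n MP by blast
  qed
  then obtain G where "ext ?T (Neg \<phi>) \<subseteq> G" "mcs G"
    using lindenbaum[OF ext_thry[OF thry_thms]] by blast
  moreover have "Neg \<phi> \<in> ext ?T (Neg \<phi>)" using ext_in[OF thry_thms] .
  ultimately show False using assms mneg by blast
qed

lemma mcs_cong_int: fixes a b :: "('p::countable, 'a::countable) fm"
  assumes "\<And>H. mcs H \<Longrightarrow> (a \<in> H \<longleftrightarrow> b \<in> H)" "mcs G"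
  shows "IntOp a \<in> G \<longleftrightarrow> IntOp b \<in> G"
proof -
  have "apal_thm (Imp a b)" "apal_thm (Imp b a)" using assms(1) by (auto intro!: mcs_valid)
  thus ?thesis using mInt_mono[OF assms(2)] by blast
qed

lemma K_exists: fixes G :: "('p::countable, 'a::countable) fm set"
  assumes m: "mcs G" and n: "K i \<phi> \<notin> G"
  shows "\<exists>H. mcs H \<and> (\<forall>\<gamma>. K i \<gamma> \<in> G \<longleftrightarrow> K i \<gamma> \<in> H) \<and> \<phi> \<notin> H"
proof -
  let ?D = "{\<gamma>. K i \<gamma> \<in> G}"
  have th: "thry ?D" unfolding thry_def
  proof (intro conjI allI impI; simp)
    show "K i \<gamma> \<in> G" if "apal_thm \<gamma>" for \<gamma> by (rule mthm[OF m NecK[OF that]])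
    show "K i b \<in> G" if "K i (Imp a b) \<in> G" "K i a \<in> G" for a b using mKK[OF m] that by blast
    show "K i (fill \<xi> (Box \<gamma>)) \<in> G" if "\<forall>\<psi>. pal \<psi> \<longrightarrow> K i (fill \<xi> (Ann \<psi> \<gamma>)) \<in> G" for \<xi> \<gamma>
      using that thry_dr5[OF mthry[OF m], of "NK i \<xi>" \<gamma>] by simp
  qed
  have "fbot \<notin> ext ?D (Neg \<phi>)"
  proof
    assume "fbot \<in> ext ?D (Neg \<phi>)"
    hence "K i (Neg (Neg \<phi>)) \<in> G" using ext_cons[OF th] by blast
    moreover have "apal_thm (Imp (Neg (Neg \<phi>)) \<phi>)" by (rule Taut) (simp add: tautology_def)
    ultimately show False using mK_mono[OF m] n by blast
  qed
  then obtain H where H: "ext ?D (Neg \<phi>) \<subseteq> H" "mcs H" using lindenbaum[OF ext_thry[OF th]] by blast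
  have sub: "?D \<subseteq> H" using H ext_sub[OF th] by blast
  have "Neg \<phi> \<in> H" using H ext_in[OF th] by blast
  hence "\<phi> \<notin> H" using H by simp
  moreover have "K i \<gamma> \<in> G \<longleftrightarrow> K i \<gamma> \<in> H" for \<gamma>
  proof
    assume "K i \<gamma> \<in> G" thus "K i \<gamma> \<in> H" using mK4[OF m] sub by blast
  next
    assume a: "K i \<gamma> \<in> H" show "K i \<gamma> \<in> G"
    proof (rule ccontr)
      assume "K i \<gamma> \<notin> G"
      hence "Neg (K i \<gamma>) \<in> H" using mK5[OF m] sub by blast
      thus False using a H by simp
    qed
  qed
  ultimately show ?thesis using H by blast
qed

lemma Int_exists: fixes G :: "('p::countable, 'a::countable) fm set"
  assumes m: "mcs G" and n: "IntOp \<phi> \<notin> G" and p: "IntOp \<psi> \<in> G"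
  shows "\<exists>H. mcs H \<and> (\<forall>i \<gamma>. K i \<gamma> \<in> G \<longleftrightarrow> K i \<gamma> \<in> H) \<and> IntOp \<psi> \<in> H \<and> \<phi> \<notin> H"
proof -
  let ?D = "{\<gamma>. IntOp \<gamma> \<in> G}"
  have th: "thry ?D" unfolding thry_def
  proof (intro conjI allI impI; simp)
    show "IntOp \<gamma> \<in> G" if "apal_thm \<gamma>" for \<gamma> by (rule mthm[OF m NecInt[OF that]])
    show "IntOp b \<in> G" if "IntOp (Imp a b) \<in> G" "IntOp a \<in> G" for a b using mIntK[OF m] that by blast
    show "IntOp (fill \<xi> (Box \<gamma>)) \<in> G" if "\<forall>\<psi>. pal \<psi> \<longrightarrow> IntOp (fill \<xi> (Ann \<psi> \<gamma>)) \<in> G" for \<xi> \<gamma>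
      using that thry_dr5[OF mthry[OF m], of "NInt \<xi>" \<gamma>] by simp
  qed
  let ?f = "Neg (Imp (IntOp \<psi>) \<phi>)"
  have "fbot \<notin> ext ?D ?f"
  proof
    assume "fbot \<in> ext ?D ?f"
    hence "IntOp (Neg ?f) \<in> G" using ext_cons[OF th] by blast
    moreover have "apal_thm (Imp (Neg ?f) (Imp (IntOp \<psi>) \<phi>))" by (rule Taut) (simp add: tautology_def)
    ultimately have "IntOp (Imp (IntOp \<psi>) \<phi>) \<in> G" using mInt_mono[OF m] by blast
    hence "IntOp \<phi> \<in> G" using mIntK[OF m] mInt4[OF m p] by blast
    thus False using n by blast
  qed
  then obtain H where H: "ext ?D ?f \<subseteq> H" "mcs H" using lindenbaum[OF ext_thry[OF th]] by blast
  have sub: "?D \<subseteq> H" using H ext_sub[OF th] by blast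
  have "?f \<in> H" using H ext_in[OF th] by blast
  hence "\<phi> \<notin> H" "IntOp \<psi> \<in> H" using H by auto
  moreover have "K i \<gamma> \<in> G \<longleftrightarrow> K i \<gamma> \<in> H" for i \<gamma>
  proof
    assume "K i \<gamma> \<in> G" thus "K i \<gamma> \<in> H" using mK4[OF m] mKInt[OF m] sub by blast
  next
    assume a: "K i \<gamma> \<in> H" show "K i \<gamma> \<in> G"
    proof (rule ccontr)
      assume "K i \<gamma> \<notin> G"
      hence "Neg (K i \<gamma>) \<in> H" using mK5[OF m] mKInt[OF m] sub by blast
      thus False using a H by simp
    qed
  qed
  ultimately show ?thesis using H by blast
qed



lemma dom_restr: "dom (restr \<theta> U) = dom \<theta> \<inter> U"
  by (auto simp: restr_def split: if_splits)

lemma nb_restr: "x \<in> U \<Longrightarrow> x \<in> dom \<theta> \<Longrightarrow> nb (restr \<theta> U) x i = nb \<theta> x i \<inter> U"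
  by (auto simp: restr_def nb_def)

lemma restr_restr: "restr (restr \<theta> A) B = restr \<theta> (A \<inter> B)"
  by (rule ext) (auto simp: restr_def option.map_comp o_def Int_assoc Int_commute intro!: option.map_cong)

lemma nbhd_restr: assumes "nbhd_fun T \<theta>" "openin T U" shows "nbhd_fun T (restr \<theta> U)"
proof -
  have d: "dom \<theta> \<subseteq> topspace T" and h: "\<And>x i. x \<in> dom \<theta> \<Longrightarrow> openin T (nb \<theta> x i) \<and> x \<in> nb \<theta> x i \<and> nb \<theta> x i \<subseteq> dom \<theta> \<and>
        (\<forall>y\<in>dom \<theta>. y \<in> nb \<theta> x i \<longrightarrow> nb \<theta> x i = nb \<theta> y i)"
  proof -
    have nf: "dom \<theta> \<subseteq> topspace T \<and> (\<forall>x\<in>dom \<theta>. \<forall>i. openin T (nb \<theta> x i) \<and> x \<in> nb \<theta> x i \<and> nb \<theta> x i \<subseteq> dom \<theta> \<and>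
        (\<forall>y\<in>dom \<theta>. y \<in> nb \<theta> x i \<longrightarrow> nb \<theta> x i = nb \<theta> y i))" using assms(1) unfolding nbhd_fun_def .
    show "dom \<theta> \<subseteq> topspace T" using nf by (rule conjunct1)
    show "\<And>x i. x \<in> dom \<theta> \<Longrightarrow> openin T (nb \<theta> x i) \<and> x \<in> nb \<theta> x i \<and> nb \<theta> x i \<subseteq> dom \<theta> \<and>
        (\<forall>y\<in>dom \<theta>. y \<in> nb \<theta> x i \<longrightarrow> nb \<theta> x i = nb \<theta> y i)"
    proof -
      fix x i assume xd: "x \<in> dom \<theta>"
      have "\<forall>i. openin T (nb \<theta> x i) \<and> x \<in> nb \<theta> x i \<and> nb \<theta> x i \<subseteq> dom \<theta> \<and>
        (\<forall>y\<in>dom \<theta>. y \<in> nb \<theta> x i \<longrightarrow> nb \<theta> x i = nb \<theta> y i)" using conjunct2[OF nf] xd by (rule bspec)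
      thus "openin T (nb \<theta> x i) \<and> x \<in> nb \<theta> x i \<and> nb \<theta> x i \<subseteq> dom \<theta> \<and>
        (\<forall>y\<in>dom \<theta>. y \<in> nb \<theta> x i \<longrightarrow> nb \<theta> x i = nb \<theta> y i)" by (rule spec)
    qed
  qed
  show ?thesis unfolding nbhd_fun_def dom_restr
  proof (intro conjI ballI allI)
    show "dom \<theta> \<inter> U \<subseteq> topspace T" using d by blast
  next
    fix x i assume x: "x \<in> dom \<theta> \<inter> U"
    have e: "nb (restr \<theta> U) x i = nb \<theta> x i \<inter> U" using nb_restr[OF IntD2[OF x] IntD1[OF x]] .
    have hx: "openin T (nb \<theta> x i)" "x \<in> nb \<theta> x i" "nb \<theta> x i \<subseteq> dom \<theta>" using h[of x i] x by (meson IntD1)+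
    show "openin T (nb (restr \<theta> U) x i)" unfolding e using hx(1) assms(2) by (rule openin_Int)
    show "x \<in> nb (restr \<theta> U) x i" unfolding e using hx(2) x by blast
    show "nb (restr \<theta> U) x i \<subseteq> dom \<theta> \<inter> U" unfolding e using hx(3) by blast
  next
    fix x i y assume x: "x \<in> dom \<theta> \<inter> U" and y0: "y \<in> dom \<theta> \<inter> U"
    have e: "nb (restr \<theta> U) x i = nb \<theta> x i \<inter> U" using nb_restr[OF IntD2[OF x] IntD1[OF x]] .
    show "y \<in> nb (restr \<theta> U) x i \<longrightarrow> nb (restr \<theta> U) x i = nb (restr \<theta> U) y i"
    proof
      assume y1: "y \<in> nb (restr \<theta> U) x i"
      have "nb (restr \<theta> U) y i = nb \<theta> y i \<inter> U" using nb_restr[OF IntD2[OF y0] IntD1[OF y0]] .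
      have "y \<in> nb \<theta> x i" using y1 e by simp
      moreover have "\<forall>y\<in>dom \<theta>. y \<in> nb \<theta> x i \<longrightarrow> nb \<theta> x i = nb \<theta> y i" using h[of x i] x by (meson IntD1)
      moreover have "y \<in> dom \<theta>" using y0 by blast
      ultimately have "nb \<theta> x i = nb \<theta> y i" by (meson bspec mp)
      moreover note \<open>nb (restr \<theta> U) y i = nb \<theta> y i \<inter> U\<close>
      ultimately show "nb (restr \<theta> U) x i = nb (restr \<theta> U) y i" using e by simp
    qed
  qed
qed

definition ftop :: "('p, 'a) fm" where "ftop = Neg fbot"

lemma thm_ftop: "apal_thm ftop" by (rule Taut) (simp add: ftop_def tautology_def)

lemma mcs_int_top: "mcs G \<Longrightarrow> IntOp ftop \<in> G" by (rule mthm[OF _ NecInt[OF thm_ftop]])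

definition R :: "(('p, 'a) fm \<times> ('p, 'a) fm) set" where
  "R = inv_image (less_than <*lex*> less_than) (\<lambda>a. (boxdepth a, size a))"

lemma wfR: "wf R" unfolding R_def by auto

lemma R_iff: "(a, b) \<in> R \<longleftrightarrow> boxdepth a < boxdepth b \<or> (boxdepth a = boxdepth b \<and> size a < size b)"
  by (simp add: R_def)



locale canon =
  fixes f :: "('p::countable, 'a::countable) fm set \<Rightarrow> 'x"
  assumes injf: "inj f"
begin

definition X :: "'x set" where "X = f ` {G. mcs G}"
definition th :: "'x \<Rightarrow> ('p, 'a) fm set" where "th x = inv f x"
definition hat :: "('p, 'a) fm \<Rightarrow> 'x set" where "hat \<phi> = {y \<in> X. \<phi> \<in> th y}"
definition eqv :: "'a \<Rightarrow> 'x \<Rightarrow> 'x \<Rightarrow> bool" where "eqv i x y \<longleftrightarrow> (\<forall>\<gamma>. K i \<gamma> \<in> th x \<longleftrightarrow> K i \<gamma> \<in> th y)"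
definition cls :: "'x \<Rightarrow> 'a \<Rightarrow> 'x set" where "cls x i = {y \<in> X. eqv i x y}"
definition copen :: "'x set \<Rightarrow> bool" where
  "copen U \<longleftrightarrow> U \<subseteq> X \<and> (\<forall>x\<in>U. \<exists>\<psi>. IntOp \<psi> \<in> th x \<and> {y \<in> X. (\<forall>i. eqv i x y) \<and> IntOp \<psi> \<in> th y} \<subseteq> U)"
definition T :: "'x topology" where "T = topology copen"
definition \<theta>0 :: "('x, 'a) nfun" where "\<theta>0 x = (if x \<in> X then Some (\<lambda>i. cls x i) else None)"
definition Phi :: "('x, 'a) nfun set" where "Phi = {restr \<theta>0 U | U. openin T U}"
definition V :: "'p \<Rightarrow> 'x set" where "V p = hat (Atom p)"

lemma th_f[simp]: "th (f G) = G" by (simp add: th_def injf)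

lemma X_mcs: "x \<in> X \<Longrightarrow> mcs (th x)" by (auto simp: X_def)

lemma f_X: "mcs G \<Longrightarrow> f G \<in> X" by (simp add: X_def)

lemma hat_sub: "hat \<phi> \<subseteq> X" by (auto simp: hat_def)

lemma istop: "istopology copen"
  unfolding istopology_def
proof (intro conjI allI impI)
  fix S U assume S: "copen S" and U: "copen U"
  show "copen (S \<inter> U)" unfolding copen_def
  proof (intro conjI ballI)
    show "S \<inter> U \<subseteq> X" using S by (auto simp: copen_def)
  next
    fix x assume x: "x \<in> S \<inter> U"
    obtain \<psi>1 where p1: "IntOp \<psi>1 \<in> th x" "{y \<in> X. (\<forall>i. eqv i x y) \<and> IntOp \<psi>1 \<in> th y} \<subseteq> S"
      using S x unfolding copen_def by blast
    obtain \<psi>2 where p2: "IntOp \<psi>2 \<in> th x" "{y \<in> X. (\<forall>i. eqv i x y) \<and> IntOp \<psi>2 \<in> th y} \<subseteq> U"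
      using U x unfolding copen_def by blast
    have xX: "x \<in> X" using x S by (auto simp: copen_def)
    show "\<exists>\<psi>. IntOp \<psi> \<in> th x \<and> {y \<in> X. (\<forall>i. eqv i x y) \<and> IntOp \<psi> \<in> th y} \<subseteq> S \<inter> U"
    proof (intro exI conjI)
      show "IntOp (Conj \<psi>1 \<psi>2) \<in> th x" using mint_conj[OF X_mcs[OF xX]] p1 p2 by simp
      show "{y \<in> X. (\<forall>i. eqv i x y) \<and> IntOp (Conj \<psi>1 \<psi>2) \<in> th y} \<subseteq> S \<inter> U"
      proof
        fix y assume "y \<in> {y \<in> X. (\<forall>i. eqv i x y) \<and> IntOp (Conj \<psi>1 \<psi>2) \<in> th y}"
        hence y: "y \<in> X" "\<forall>i. eqv i x y" "IntOp (Conj \<psi>1 \<psi>2) \<in> th y" by auto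
        hence "IntOp \<psi>1 \<in> th y" "IntOp \<psi>2 \<in> th y" using mint_conj[OF X_mcs[OF y(1)]] by simp_all
        thus "y \<in> S \<inter> U" using p1(2) p2(2) y by blast
      qed
    qed
  qed
next
  fix KK assume h: "\<forall>K\<in>KK. copen K"
  show "copen (\<Union>KK)" unfolding copen_def
  proof (intro conjI ballI)
    show "\<Union>KK \<subseteq> X" using h by (auto simp: copen_def)
  next
    fix x assume "x \<in> \<Union>KK"
    then obtain K where K: "K \<in> KK" "x \<in> K" by blast
    then obtain \<psi> where "IntOp \<psi> \<in> th x" "{y \<in> X. (\<forall>i. eqv i x y) \<and> IntOp \<psi> \<in> th y} \<subseteq> K"
      using h unfolding copen_def by blast
    thus "\<exists>\<psi>. IntOp \<psi> \<in> th x \<and> {y \<in> X. (\<forall>i. eqv i x y) \<and> IntOp \<psi> \<in> th y} \<subseteq> \<Union>KK"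
      using K by blast
  qed
qed

lemma openT: "openin T = copen" unfolding T_def using istop by simp

lemma X_open: "copen X"
  unfolding copen_def using mcs_int_top[OF X_mcs] by blast

lemma topspaceT: "topspace T = X"
proof -
  have "\<Union>{S. copen S} \<subseteq> X" by (auto simp: copen_def)
  moreover have "X \<subseteq> \<Union>{S. copen S}" using X_open by blast
  ultimately show ?thesis unfolding topspace_def openT by blast
qed

lemma eqv_refl: "eqv i x x" by (simp add: eqv_def)
lemma eqv_sym: "eqv i x y \<Longrightarrow> eqv i y x" by (simp add: eqv_def)
lemma eqv_trans: "eqv i x y \<Longrightarrow> eqv i y z \<Longrightarrow> eqv i x z" by (simp add: eqv_def)

lemma cls_open: "copen (cls x i)"
  unfolding copen_def
proof (intro conjI ballI)
  show "cls x i \<subseteq> X" by (auto simp: cls_def)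
next
  fix y assume y: "y \<in> cls x i"
  hence yX: "y \<in> X" and e: "eqv i x y" by (auto simp: cls_def)
  show "\<exists>\<psi>. IntOp \<psi> \<in> th y \<and> {z \<in> X. (\<forall>j. eqv j y z) \<and> IntOp \<psi> \<in> th z} \<subseteq> cls x i"
  proof (intro exI conjI)
    show "IntOp ftop \<in> th y" using mcs_int_top[OF X_mcs[OF yX]] .
    show "{z \<in> X. (\<forall>j. eqv j y z) \<and> IntOp ftop \<in> th z} \<subseteq> cls x i"
      using e eqv_trans by (auto simp: cls_def)
  qed
qed

lemma hat_int_open: "copen (hat (IntOp \<phi>))"
  unfolding copen_def
proof (intro conjI ballI)
  show "hat (IntOp \<phi>) \<subseteq> X" by (rule hat_sub)
next
  fix y assume "y \<in> hat (IntOp \<phi>)"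
  thus "\<exists>\<psi>. IntOp \<psi> \<in> th y \<and> {z \<in> X. (\<forall>j. eqv j y z) \<and> IntOp \<psi> \<in> th z} \<subseteq> hat (IntOp \<phi>)"
    by (intro exI[of _ \<phi>]) (auto simp: hat_def)
qed

lemma K_lemma: assumes x: "x \<in> X" shows "K i \<phi> \<in> th x \<longleftrightarrow> (\<forall>y\<in>cls x i. \<phi> \<in> th y)"
proof
  assume a: "K i \<phi> \<in> th x"
  show "\<forall>y\<in>cls x i. \<phi> \<in> th y"
  proof
    fix y assume "y \<in> cls x i"
    hence y: "y \<in> X" "eqv i x y" by (auto simp: cls_def)
    hence "K i \<phi> \<in> th y" using a by (simp add: eqv_def)
    thus "\<phi> \<in> th y" using mKT[OF X_mcs[OF y(1)]] by blast
  qed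
next
  assume a: "\<forall>y\<in>cls x i. \<phi> \<in> th y"
  show "K i \<phi> \<in> th x"
  proof (rule ccontr)
    assume "K i \<phi> \<notin> th x"
    then obtain H where H: "mcs H" "\<forall>\<gamma>. K i \<gamma> \<in> th x \<longleftrightarrow> K i \<gamma> \<in> H" "\<phi> \<notin> H"
      using K_exists[OF X_mcs[OF x]] by blast
    have "f H \<in> cls x i" using H(1,2) f_X unfolding cls_def eqv_def by simp
    thus False using a H(3) by fastforce
  qed
qed

lemma int_lemma: "T interior_of hat \<phi> = hat (IntOp \<phi>)"
proof
  show "hat (IntOp \<phi>) \<subseteq> T interior_of hat \<phi>"
  proof
    fix x assume x: "x \<in> hat (IntOp \<phi>)"
    have "hat (IntOp \<phi>) \<subseteq> hat \<phi>" using mIntT X_mcs by (auto simp: hat_def)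
    thus "x \<in> T interior_of hat \<phi>" unfolding interior_of_def openT using x hat_int_open by blast
  qed
next
  show "T interior_of hat \<phi> \<subseteq> hat (IntOp \<phi>)"
  proof
    fix x assume "x \<in> T interior_of hat \<phi>"
    then obtain U where U: "copen U" "x \<in> U" "U \<subseteq> hat \<phi>" unfolding interior_of_def openT by blast
    hence xX: "x \<in> X" by (auto simp: copen_def)
    obtain \<psi> where p: "IntOp \<psi> \<in> th x" "{y \<in> X. (\<forall>i. eqv i x y) \<and> IntOp \<psi> \<in> th y} \<subseteq> U"
      using U unfolding copen_def by blast
    have "IntOp \<phi> \<in> th x"
    proof (rule ccontr)
      assume "IntOp \<phi> \<notin> th x"
      then obtain H where H: "mcs H" "\<forall>i \<gamma>. K i \<gamma> \<in> th x \<longleftrightarrow> K i \<gamma> \<in> H" "IntOp \<psi> \<in> H" "\<phi> \<notin> H"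
        using Int_exists[OF X_mcs[OF xX] _ p(1)] by blast
      have "f H \<in> {y \<in> X. (\<forall>i. eqv i x y) \<and> IntOp \<psi> \<in> th y}"
        using H(1,2,3) f_X unfolding eqv_def by simp
      hence "f H \<in> hat \<phi>" using p(2) U(3) by blast
      thus False using H(4) by (simp add: hat_def)
    qed
    thus "x \<in> hat (IntOp \<phi>)" using xX by (simp add: hat_def)
  qed
qed

lemma dom_theta0: "dom \<theta>0 = X" by (auto simp: \<theta>0_def split: if_splits)

lemma nb_theta0: "x \<in> X \<Longrightarrow> nb \<theta>0 x i = cls x i" by (simp add: \<theta>0_def nb_def)

lemma x_cls: "x \<in> X \<Longrightarrow> x \<in> cls x i" by (simp add: cls_def eqv_refl)

lemma nbhd_theta0: "nbhd_fun T \<theta>0"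
  unfolding nbhd_fun_def dom_theta0 topspaceT
proof (intro conjI ballI allI impI subset_refl)
  fix x i assume x: "x \<in> X"
  show "openin T (nb \<theta>0 x i)" unfolding nb_theta0[OF x] openT by (rule cls_open)
  show "x \<in> nb \<theta>0 x i" unfolding nb_theta0[OF x] using x by (rule x_cls)
  show "nb \<theta>0 x i \<subseteq> X" unfolding nb_theta0[OF x] by (auto simp: cls_def)
next
  fix x i y assume x: "x \<in> X" and y: "y \<in> X" and "y \<in> nb \<theta>0 x i"
  hence "eqv i x y" by (simp add: nb_theta0 cls_def)
  thus "nb \<theta>0 x i = nb \<theta>0 y i" unfolding nb_theta0[OF x] nb_theta0[OF y] cls_def
    using eqv_trans eqv_sym by blast
qed

lemma theta0_restr: "restr \<theta>0 X = \<theta>0"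
proof
  fix x show "restr \<theta>0 X x = \<theta>0 x"
    by (cases "x \<in> X") (auto simp: restr_def \<theta>0_def cls_def fun_eq_iff)
qed

lemma theta0_Phi: "\<theta>0 \<in> Phi"
  unfolding Phi_def openT using theta0_restr[symmetric] X_open by blast

lemma topo: "topo_model T Phi V"
  unfolding topo_model_def nbhd_set_def
proof (intro conjI allI ballI impI)
  fix \<theta> assume "\<theta> \<in> Phi"
  then obtain U where U: "\<theta> = restr \<theta>0 U" "openin T U" by (auto simp: Phi_def)
  show "nbhd_fun T \<theta>" unfolding U(1) using nbhd_theta0 U(2) by (rule nbhd_restr)
  fix U' assume "openin T U'"
  hence "openin T (U \<inter> U')" using U(2) by (rule openin_Int[rotated])
  thus "restr \<theta> U' \<in> Phi" unfolding U(1) restr_restr Phi_def by blast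
next
  fix p show "V p \<subseteq> topspace T" unfolding topspaceT V_def by (rule hat_sub)
qed

end



lemma R_Neg: "(a, Neg a) \<in> R" by (simp add: R_iff)
lemma R_Conj1: "(a, Conj a b) \<in> R" by (simp add: R_iff max_def) arith?
lemma R_Conj2: "(b, Conj a b) \<in> R" by (simp add: R_iff max_def) arith?
lemma R_K: "(a, K i a) \<in> R" by (simp add: R_iff max_def) arith?
lemma R_Int: "(a, IntOp a) \<in> R" by (simp add: R_iff max_def) arith?
lemma R_Ann1: "(a, Ann a b) \<in> R" by (simp add: R_iff max_def) arith?
lemma R_Ann2: "(b, Ann a b) \<in> R" by (simp add: R_iff max_def) arith?
lemma R_Box: "pal c \<Longrightarrow> (Ann c a, Box a) \<in> R" by (simp add: R_iff pal_boxdepth)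

lemma sat_Box_Ann: "sat T V \<theta> x (Box a) \<longleftrightarrow> (\<forall>c. pal c \<longrightarrow> sat T V \<theta> x (Ann c a))"
  by simp

context canon begin

lemma dom_rA: "dom (restr \<theta>0 (hat \<phi>)) = hat \<phi>"
  by (simp add: dom_restr dom_theta0 Int_absorb1[OF hat_sub])

lemma nb_rA: "x \<in> hat \<phi> \<Longrightarrow> nb (restr \<theta>0 (hat \<phi>)) x i = cls x i \<inter> hat \<phi>"
proof -
  assume x: "x \<in> hat \<phi>"
  hence xX: "x \<in> X" using hat_sub by blast
  show ?thesis using nb_restr[OF x, of \<theta>0 i] nb_theta0[OF xX, of i] xX by (simp add: dom_theta0)
qed

lemma ann_int_key: assumes y: "y \<in> X"
  shows "IntOp (Neg (Ann \<psi> (Neg (IntOp a)))) \<in> th y \<longleftrightarrow>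
         IntOp \<psi> \<in> th y \<and> IntOp (Conj (IntOp \<psi>) (Ann \<psi> a)) \<in> th y"
proof -
  have m: "mcs (th y)" using X_mcs[OF y] .
  have eq: "Neg (Ann \<psi> (Neg (IntOp a))) \<in> H \<longleftrightarrow> Conj (IntOp \<psi>) (IntOp (Ann \<psi> a)) \<in> H" if h: "mcs H" for H
    using mR2[OF h, of \<psi> "IntOp a"] mR4[OF h, of \<psi> a] mneg[OF h] mconj[OF h] by auto
  have "IntOp (Neg (Ann \<psi> (Neg (IntOp a)))) \<in> th y \<longleftrightarrow> IntOp (Conj (IntOp \<psi>) (IntOp (Ann \<psi> a))) \<in> th y"
    using mcs_cong_int[OF eq m] .
  thus ?thesis using mint_conj[OF m] mint_int[OF m] by simp
qed

lemma TL1: "\<forall>\<psi> x. x \<in> hat (IntOp \<psi>) \<longrightarrow>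
   (sat T V (restr \<theta>0 (hat (IntOp \<psi>))) x \<gamma> \<longleftrightarrow> Ann \<psi> \<gamma> \<in> th x)"
proof (induction \<gamma> rule: wf_induct_rule[OF wfR])
  case (1 \<gamma>)
  show ?case
  proof (intro allI impI)
    fix \<psi> x assume x: "x \<in> hat (IntOp \<psi>)"
    let ?A = "hat (IntOp \<psi>)"
    let ?\<theta> = "restr \<theta>0 ?A"
    have xX: "x \<in> X" and xi: "IntOp \<psi> \<in> th x" using x by (auto simp: hat_def)
    have m: "mcs (th x)" using X_mcs[OF xX] .
    have IHs: "sat T V ?\<theta> y \<delta> \<longleftrightarrow> Ann \<psi> \<delta> \<in> th y" if "(\<delta>, \<gamma>) \<in> R" "y \<in> ?A" for \<delta> y
    proof -
      have "\<forall>\<psi> x. x \<in> hat (IntOp \<psi>) \<longrightarrow> (sat T V (restr \<theta>0 (hat (IntOp \<psi>))) x \<delta> \<longleftrightarrow> Ann \<psi> \<delta> \<in> th x)"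
        using 1 that(1) .
      thus ?thesis using that(2) by blast
    qed
    have setS: "{y \<in> dom ?\<theta>. sat T V ?\<theta> y \<delta>} = hat (Conj (IntOp \<psi>) (Ann \<psi> \<delta>))" if d: "(\<delta>, \<gamma>) \<in> R" for \<delta>
    proof (rule set_eqI)
      fix y
      show "y \<in> {y \<in> dom ?\<theta>. sat T V ?\<theta> y \<delta>} \<longleftrightarrow> y \<in> hat (Conj (IntOp \<psi>) (Ann \<psi> \<delta>))"
      proof (cases "y \<in> X")
        case True
        show ?thesis unfolding dom_rA using IHs[OF d] mconj[OF X_mcs[OF True]] True
          by (auto simp: hat_def)
      next
        case False thus ?thesis unfolding dom_rA by (auto simp: hat_def)
      qed
    qed
    show "sat T V ?\<theta> x \<gamma> \<longleftrightarrow> Ann \<psi> \<gamma> \<in> th x"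
    proof (cases \<gamma>)
      case (Atom p)
      show ?thesis unfolding Atom using mR1[OF m, of \<psi> p] xi xX by (simp add: V_def hat_def)
    next
      case (Neg \<delta>)
      show ?thesis unfolding Neg using IHs[OF R_Neg[of \<delta>, folded Neg] x] mR2[OF m, of \<psi> \<delta>] xi by simp
    next
      case (Conj \<delta>1 \<delta>2)
      show ?thesis unfolding Conj using IHs[OF R_Conj1[of \<delta>1 \<delta>2, folded Conj] x]
        IHs[OF R_Conj2[of \<delta>2 \<delta>1, folded Conj] x] mR3[OF m, of \<psi> \<delta>1 \<delta>2] by simp
    next
      case (K i \<delta>)
      have d: "(\<delta>, \<gamma>) \<in> R" unfolding K by (rule R_K)
      have "sat T V ?\<theta> x (K i \<delta>) \<longleftrightarrow> (\<forall>y\<in>cls x i \<inter> ?A. Ann \<psi> \<delta> \<in> th y)"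
        using IHs[OF d] by (simp add: nb_rA[OF x])
      also have "\<dots> \<longleftrightarrow> (\<forall>y\<in>cls x i. Ann \<psi> \<delta> \<in> th y)"
      proof
        assume a: "\<forall>y\<in>cls x i \<inter> ?A. Ann \<psi> \<delta> \<in> th y"
        show "\<forall>y\<in>cls x i. Ann \<psi> \<delta> \<in> th y"
        proof
          fix y assume y: "y \<in> cls x i"
          hence yX: "y \<in> X" by (simp add: cls_def)
          show "Ann \<psi> \<delta> \<in> th y"
          proof (cases "IntOp \<psi> \<in> th y")
            case True thus ?thesis using a y yX by (simp add: hat_def)
          next
            case False thus ?thesis using ann_noint[OF X_mcs[OF yX]] by blast
          qed
        qed
      qed auto
      also have "\<dots> \<longleftrightarrow> K i (Ann \<psi> \<delta>) \<in> th x" using K_lemma[OF xX] by simp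
      also have "\<dots> \<longleftrightarrow> Ann \<psi> (K i \<delta>) \<in> th x" using mR5[OF m, of \<psi> i \<delta>] xi by simp
      finally show ?thesis unfolding K .
    next
      case (IntOp \<delta>)
      have d: "(\<delta>, \<gamma>) \<in> R" unfolding IntOp by (rule R_Int)
      have "sat T V ?\<theta> x (IntOp \<delta>) \<longleftrightarrow> x \<in> hat (IntOp (Conj (IntOp \<psi>) (Ann \<psi> \<delta>)))"
        using setS[OF d] int_lemma by simp
      also have "\<dots> \<longleftrightarrow> IntOp (Ann \<psi> \<delta>) \<in> th x"
        using xX xi mint_conj[OF m] mint_int[OF m] by (simp add: hat_def)
      also have "\<dots> \<longleftrightarrow> Ann \<psi> (IntOp \<delta>) \<in> th x" using mR4[OF m, of \<psi> \<delta>] xi by simp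
      finally show ?thesis unfolding IntOp .
    next
      case (Ann a b)
      have da: "(a, \<gamma>) \<in> R" unfolding Ann by (rule R_Ann1)
      have db: "(b, \<gamma>) \<in> R" unfolding Ann by (rule R_Ann2)
      let ?\<psi>' = "Neg (Ann \<psi> (Neg (IntOp a)))"
      let ?B = "hat (IntOp (Conj (IntOp \<psi>) (Ann \<psi> a)))"
      have intS: "T interior_of {y \<in> dom ?\<theta>. sat T V ?\<theta> y a} = ?B"
        using setS[OF da] int_lemma by simp
      have key: "?A \<inter> ?B = hat (IntOp ?\<psi>')"
      proof (rule set_eqI)
        fix y show "y \<in> ?A \<inter> ?B \<longleftrightarrow> y \<in> hat (IntOp ?\<psi>')"
          using ann_int_key[of y \<psi> a] by (auto simp: hat_def)
      qed
      have s: "sat T V ?\<theta> x (Ann a b) \<longleftrightarrow> (x \<in> ?B \<longrightarrow> sat T V (restr \<theta>0 (hat (IntOp ?\<psi>'))) x b)"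
        by (simp only: sat.simps intS restr_restr key)
      have r6: "Ann \<psi> (Ann a b) \<in> th x \<longleftrightarrow> Ann ?\<psi>' b \<in> th x" using mR6[OF m, of \<psi> a b] .
      show ?thesis
      proof (cases "x \<in> ?B")
        case True
        hence xp: "x \<in> hat (IntOp ?\<psi>')" using x key by blast
        have "\<forall>\<psi> x. x \<in> hat (IntOp \<psi>) \<longrightarrow> (sat T V (restr \<theta>0 (hat (IntOp \<psi>))) x b \<longleftrightarrow> Ann \<psi> b \<in> th x)"
          using 1 db .
        hence "sat T V (restr \<theta>0 (hat (IntOp ?\<psi>'))) x b \<longleftrightarrow> Ann ?\<psi>' b \<in> th x" using xp by blast
        thus ?thesis unfolding Ann using s r6 True by simp
      next
        case False
        hence "x \<notin> hat (IntOp ?\<psi>')" using key by blast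
        hence "IntOp ?\<psi>' \<notin> th x" using xX by (simp add: hat_def)
        hence "Ann ?\<psi>' b \<in> th x" using ann_noint[OF m] by blast
        thus ?thesis unfolding Ann using s r6 False by simp
      qed
    next
      case (Box \<delta>)
      have "sat T V ?\<theta> x (Box \<delta>) \<longleftrightarrow> (\<forall>c. pal c \<longrightarrow> sat T V ?\<theta> x (Ann c \<delta>))" by (rule sat_Box_Ann)
      also have "\<dots> \<longleftrightarrow> (\<forall>c. pal c \<longrightarrow> Ann \<psi> (Ann c \<delta>) \<in> th x)"
        using IHs[OF _ x] R_Box[where a=\<delta>] unfolding Box by blast
      also have "\<dots> \<longleftrightarrow> Ann \<psi> (Box \<delta>) \<in> th x" using mann_box[OF m] by simp
      finally show ?thesis unfolding Box .
    qed
  qed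
qed

lemma TL0: "\<forall>x. x \<in> X \<longrightarrow> (sat T V \<theta>0 x \<gamma> \<longleftrightarrow> \<gamma> \<in> th x)"
proof (induction \<gamma> rule: wf_induct_rule[OF wfR])
  case (1 \<gamma>)
  show ?case
  proof (intro allI impI)
    fix x assume xX: "x \<in> X"
    have m: "mcs (th x)" using X_mcs[OF xX] .
    have IHs: "sat T V \<theta>0 y \<delta> \<longleftrightarrow> \<delta> \<in> th y" if "(\<delta>, \<gamma>) \<in> R" "y \<in> X" for \<delta> y
    proof -
      have "\<forall>x. x \<in> X \<longrightarrow> (sat T V \<theta>0 x \<delta> \<longleftrightarrow> \<delta> \<in> th x)" using 1 that(1) .
      thus ?thesis using that(2) by blast
    qed
    have setS: "{y \<in> dom \<theta>0. sat T V \<theta>0 y \<delta>} = hat \<delta>" if d: "(\<delta>, \<gamma>) \<in> R" for \<delta>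
      unfolding dom_theta0 hat_def using IHs[OF d] by auto
    show "sat T V \<theta>0 x \<gamma> \<longleftrightarrow> \<gamma> \<in> th x"
    proof (cases \<gamma>)
      case (Atom p)
      show ?thesis unfolding Atom using xX by (simp add: V_def hat_def)
    next
      case (Neg \<delta>)
      show ?thesis unfolding Neg using IHs[OF R_Neg[of \<delta>, folded Neg] xX] mneg[OF m] by simp
    next
      case (Conj \<delta>1 \<delta>2)
      show ?thesis unfolding Conj using IHs[OF R_Conj1[of \<delta>1 \<delta>2, folded Conj] xX]
        IHs[OF R_Conj2[of \<delta>2 \<delta>1, folded Conj] xX] mconj[OF m] by simp
    next
      case (K i \<delta>)
      have d: "(\<delta>, \<gamma>) \<in> R" unfolding K by (rule R_K)
      have "sat T V \<theta>0 x (K i \<delta>) \<longleftrightarrow> (\<forall>y\<in>cls x i. \<delta> \<in> th y)"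
        using IHs[OF d] by (simp add: nb_theta0[OF xX] cls_def)
      also have "\<dots> \<longleftrightarrow> K i \<delta> \<in> th x" using K_lemma[OF xX] by simp
      finally show ?thesis unfolding K .
    next
      case (IntOp \<delta>)
      have d: "(\<delta>, \<gamma>) \<in> R" unfolding IntOp by (rule R_Int)
      show ?thesis unfolding IntOp using setS[OF d] int_lemma xX by (simp add: hat_def)
    next
      case (Ann a b)
      have da: "(a, \<gamma>) \<in> R" unfolding Ann by (rule R_Ann1)
      have intS: "T interior_of {y \<in> dom \<theta>0. sat T V \<theta>0 y a} = hat (IntOp a)"
        using setS[OF da] int_lemma by simp
      have s: "sat T V \<theta>0 x (Ann a b) \<longleftrightarrow> (x \<in> hat (IntOp a) \<longrightarrow> sat T V (restr \<theta>0 (hat (IntOp a))) x b)"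
        by (simp only: sat.simps intS)
      show ?thesis
      proof (cases "x \<in> hat (IntOp a)")
        case True
        hence "sat T V (restr \<theta>0 (hat (IntOp a))) x b \<longleftrightarrow> Ann a b \<in> th x" using TL1 by blast
        thus ?thesis unfolding Ann using s True by simp
      next
        case False
        hence "IntOp a \<notin> th x" using xX by (simp add: hat_def)
        hence "Ann a b \<in> th x" using ann_noint[OF m] by blast
        thus ?thesis unfolding Ann using s False by simp
      qed
    next
      case (Box \<delta>)
      have "sat T V \<theta>0 x (Box \<delta>) \<longleftrightarrow> (\<forall>c. pal c \<longrightarrow> sat T V \<theta>0 x (Ann c \<delta>))" by (rule sat_Box_Ann)
      also have "\<dots> \<longleftrightarrow> (\<forall>c. pal c \<longrightarrow> Ann c \<delta> \<in> th x)"
        using IHs[OF _ xX] R_Box[where a=\<delta>] unfolding Box by blast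
      also have "\<dots> \<longleftrightarrow> Box \<delta> \<in> th x" using mbox[OF m] by simp
      finally show ?thesis unfolding Box .
    qed
  qed
qed

end


theorem mainTheorem3:
  fixes \<phi> :: "('p :: countable, 'a :: finite) fm"
  assumes "\<exists>f :: ('p, 'a) fm set \<Rightarrow> 'x. inj f"
    and "valid_in TYPE('x) \<phi>"
  shows "apal_thm \<phi>"
proof -
  obtain f :: "('p, 'a) fm set \<Rightarrow> 'x" where f: "inj f" using assms(1) by blast
  interpret c: canon f by unfold_locales (rule f)
  show ?thesis
  proof (rule mcs_valid)
    fix G :: "('p, 'a) fm set" assume G: "mcs G"
    have x: "f G \<in> c.X" using c.f_X[OF G] .
    have v: "\<forall>\<theta>\<in>c.Phi. \<forall>x\<in>dom \<theta>. sat c.T c.V \<theta> x \<phi>"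
      using assms(2) c.topo unfolding valid_in_def by blast
    have "sat c.T c.V c.\<theta>0 (f G) \<phi>" using v c.theta0_Phi x c.dom_theta0 by blast
    thus "\<phi> \<in> G" using c.TL0 x by simp
  qed
qed

end
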